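(* Let $(S,T,\alpha,\beta)$ be a matched product system of left inverse semi-braces such that the maps $r_S$ and $r_T$ associated to $S$ and $T$ are solutions. Then the map $r_{S\bowtie T}$ associated to the matched product $S\bowtie T$ is a solution, and it coincides with the matched product of solutions $r_S\bowtie r_T$, i.e. for all $(a,u),(b,v)\in S\times T$, $$r_{S\bowtie T}((a,u),(b,v))=\left(\left(\alpha_u\lambda_{\bar a}(b),\,\beta_a\lambda_{\bar u}(v)\right),\ \left(\alpha^{-1}_{\overline U}\rho_{\alpha_{\bar u}(b)}(a),\ \beta^{-1}_{\overline A}\rho_{\beta_{\bar a}(v)}(u)\right)\right),$$ where $\bar a=\alpha_u^{-1}(a)$, $\bar u=\beta_a^{-1}(u)$, $A=\alpha_u\lambda_{\bar a}(b)$, $U=\beta_a\lambda_{\bar u}(v)$, $\overline A=\alpha_U^{-1}(A)$, $\overline U=\beta_A^{-1}(U)$.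
   Context: An inverse semigroup is a semigroup $(S,\cdot)$ in which for each $a$ there is a unique $a^{-1}$ with $aa^{-1}a=a$, $a^{-1}aa^{-1}=a^{-1}$. A left inverse semi-brace is a triple $(S,+,\cdot)$ with $(S,+)$ a semigroup, $(S,\cdot)$ an inverse semigroup and $a(b+c)=ab+a(a^{-1}+c)$ for all $a,b,c$. In it set $\lambda_a(b)=a(a^{-1}+b)$, $\rho_b(a)=(a^{-1}+b)^{-1}b$; the map associated to $S$ is $r_S(a,b)=(\lambda_a(b),\rho_b(a))$. A solution is a map $r:X\times X\to X\times X$ with $(r\times\mathrm{id})(\mathrm{id}\times r)(r\times\mathrm{id})=(\mathrm{id}\times r)(r\times\mathrm{id})(\mathrm{id}\times r)$. A matched product system of left inverse semi-braces is a quadruple $(S,T,\alpha,\beta)$ where $S,T$ are left inverse semi-braces, $\alpha:T\to\mathrm{Aut}(S,+)$ is a homomorphism of inverse semigroups from $(T,\cdot)$ into the automorphism group of $(S,+)$, $\beta:S\to\mathrm{Aut}(T,+)$ is a homomorphism of inverse semigroups from $(S,\cdot)$ into the automorphism group of $(T,+)$ (write $\alpha_u=\alpha(u)$, $\beta_a=\beta(a)$, and $\alpha_u^{-1},\beta_a^{-1}$ for the inverse maps), such that for all $a,b\in S$, $u,v\in T$: $\alpha_u(\alpha_u^{-1}(a)\,b)=a\,\alpha_{\beta_a^{-1}(u)}(b)$ and $\beta_a(\beta_a^{-1}(u)\,v)=u\,\beta_{\alpha_u^{-1}(a)}(v)$; and if $\alpha_u(\alpha_u^{-1}(a)\,a)=a$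 and $\beta_a(\beta_a^{-1}(u)\,u)=u$, then $\alpha_u(a)=a$ and $\beta_a(u)=u$. The matched product $S\bowtie T$ is $S\times T$ with $(a,u)+(b,v)=(a+b,u+v)$ and $(a,u)(b,v)=(\alpha_u(\alpha_u^{-1}(a)b),\beta_a(\beta_a^{-1}(u)v))$; it is a left inverse semi-brace, and $r_{S\bowtie T}$ denotes its associated map. *)

theory Defs
  imports Main
begin

definition is_semigroup :: "('a \<Rightarrow> 'a \<Rightarrow> 'a) \<Rightarrow> bool" where
  "is_semigroup f \<longleftrightarrow> (\<forall>a b c. f (f a b) c = f a (f b c))"

definition is_inv_of :: "('a \<Rightarrow> 'a \<Rightarrow> 'a) \<Rightarrow> 'a \<Rightarrow> 'a \<Rightarrow> bool" where
  "is_inv_of mult a b \<longleftrightarrow> mult (mult a b) a = a \<and> mult (mult b a) b = b"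

definition inverse_semigroup :: "('a \<Rightarrow> 'a \<Rightarrow> 'a) \<Rightarrow> bool" where
  "inverse_semigroup mult \<longleftrightarrow> is_semigroup mult \<and> (\<forall>a. \<exists>!b. is_inv_of mult a b)"

definition sinv :: "('a \<Rightarrow> 'a \<Rightarrow> 'a) \<Rightarrow> 'a \<Rightarrow> 'a" where
  "sinv mult a = (THE b. is_inv_of mult a b)"

definition left_inverse_semi_brace :: "('a \<Rightarrow> 'a \<Rightarrow> 'a) \<Rightarrow> ('a \<Rightarrow> 'a \<Rightarrow> 'a) \<Rightarrow> bool" where
  "left_inverse_semi_brace add mult \<longleftrightarrow> is_semigroup add \<and> inverse_semigroup mult \<and>
     (\<forall>a b c. mult a (add b c) = add (mult a b) (mult a (add (sinv mult a) c)))"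

definition lam :: "('a \<Rightarrow> 'a \<Rightarrow> 'a) \<Rightarrow> ('a \<Rightarrow> 'a \<Rightarrow> 'a) \<Rightarrow> 'a \<Rightarrow> 'a \<Rightarrow> 'a" where
  "lam add mult a b = mult a (add (sinv mult a) b)"

definition rho :: "('a \<Rightarrow> 'a \<Rightarrow> 'a) \<Rightarrow> ('a \<Rightarrow> 'a \<Rightarrow> 'a) \<Rightarrow> 'a \<Rightarrow> 'a \<Rightarrow> 'a" where
  "rho add mult b a = mult (sinv mult (add (sinv mult a) b)) b"

definition assoc_map :: "('a \<Rightarrow> 'a \<Rightarrow> 'a) \<Rightarrow> ('a \<Rightarrow> 'a \<Rightarrow> 'a) \<Rightarrow> 'a \<times> 'a \<Rightarrow> 'a \<times> 'a" where
  "assoc_map add mult = (\<lambda>(a, b). (lam add mult a b, rho add mult b a))"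

definition r12 :: "('a \<times> 'a \<Rightarrow> 'a \<times> 'a) \<Rightarrow> 'a \<times> 'a \<times> 'a \<Rightarrow> 'a \<times> 'a \<times> 'a" where
  "r12 r = (\<lambda>(x, y, z). (fst (r (x, y)), snd (r (x, y)), z))"

definition r23 :: "('a \<times> 'a \<Rightarrow> 'a \<times> 'a) \<Rightarrow> 'a \<times> 'a \<times> 'a \<Rightarrow> 'a \<times> 'a \<times> 'a" where
  "r23 r = (\<lambda>(x, y, z). (x, fst (r (y, z)), snd (r (y, z))))"

definition is_solution :: "('a \<times> 'a \<Rightarrow> 'a \<times> 'a) \<Rightarrow> bool" where
  "is_solution r \<longleftrightarrow> r12 r \<circ> r23 r \<circ> r12 r = r23 r \<circ> r12 r \<circ> r23 r"

definition is_add_aut :: "('a \<Rightarrow> 'a \<Rightarrow> 'a) \<Rightarrow> ('a \<Rightarrow> 'a) \<Rightarrow> bool" where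
  "is_add_aut add f \<longleftrightarrow> bij f \<and> (\<forall>a b. f (add a b) = add (f a) (f b))"

definition hom_to_aut :: "('b \<Rightarrow> 'b \<Rightarrow> 'b) \<Rightarrow> ('a \<Rightarrow> 'a \<Rightarrow> 'a) \<Rightarrow> ('b \<Rightarrow> 'a \<Rightarrow> 'a) \<Rightarrow> bool" where
  "hom_to_aut multT addS \<alpha> \<longleftrightarrow> (\<forall>u. is_add_aut addS (\<alpha> u)) \<and>
     (\<forall>u v. \<alpha> (multT u v) = \<alpha> u \<circ> \<alpha> v)"

definition matched_product_system ::
  "('a \<Rightarrow> 'a \<Rightarrow> 'a) \<Rightarrow> ('a \<Rightarrow> 'a \<Rightarrow> 'a) \<Rightarrow> ('b \<Rightarrow> 'b \<Rightarrow> 'b) \<Rightarrow> ('b \<Rightarrow> 'b \<Rightarrow> 'b)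
   \<Rightarrow> ('b \<Rightarrow> 'a \<Rightarrow> 'a) \<Rightarrow> ('a \<Rightarrow> 'b \<Rightarrow> 'b) \<Rightarrow> bool" where
  "matched_product_system addS multS addT multT \<alpha> \<beta> \<longleftrightarrow>
     left_inverse_semi_brace addS multS \<and> left_inverse_semi_brace addT multT \<and>
     hom_to_aut multT addS \<alpha> \<and> hom_to_aut multS addT \<beta> \<and>
     (\<forall>a b u. \<alpha> u (multS (inv (\<alpha> u) a) b) = multS a (\<alpha> (inv (\<beta> a) u) b)) \<and>
     (\<forall>a u v. \<beta> a (multT (inv (\<beta> a) u) v) = multT u (\<beta> (inv (\<alpha> u) a) v)) \<and>
     (\<forall>a u. \<alpha> u (multS (inv (\<alpha> u) a) a) = a \<and> \<beta> a (multT (inv (\<beta> a) u) u) = u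
        \<longrightarrow> \<alpha> u a = a \<and> \<beta> a u = u)"

definition mp_add :: "('a \<Rightarrow> 'a \<Rightarrow> 'a) \<Rightarrow> ('b \<Rightarrow> 'b \<Rightarrow> 'b) \<Rightarrow> 'a \<times> 'b \<Rightarrow> 'a \<times> 'b \<Rightarrow> 'a \<times> 'b" where
  "mp_add addS addT = (\<lambda>(a, u) (b, v). (addS a b, addT u v))"

definition mp_mult :: "('a \<Rightarrow> 'a \<Rightarrow> 'a) \<Rightarrow> ('b \<Rightarrow> 'b \<Rightarrow> 'b) \<Rightarrow> ('b \<Rightarrow> 'a \<Rightarrow> 'a) \<Rightarrow> ('a \<Rightarrow> 'b \<Rightarrow> 'b)
   \<Rightarrow> 'a \<times> 'b \<Rightarrow> 'a \<times> 'b \<Rightarrow> 'a \<times> 'b" where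
  "mp_mult multS multT \<alpha> \<beta> = (\<lambda>(a, u) (b, v).
     (\<alpha> u (multS (inv (\<alpha> u) a) b), \<beta> a (multT (inv (\<beta> a) u) v)))"

end

theory Submission
  imports Defs
begin


locale isg =
  fixes mult :: "'a \<Rightarrow> 'a \<Rightarrow> 'a" (infixl "\<cdot>" 70)
  assumes isg: "inverse_semigroup mult"
begin

abbreviation iv where "iv \<equiv> sinv mult"

lemma assoc: "(a \<cdot> b) \<cdot> c = a \<cdot> (b \<cdot> c)"
  using isg unfolding inverse_semigroup_def is_semigroup_def by blast

lemma inv_ex: "is_inv_of mult a (iv a)"
proof -
  have "\<exists>!b. is_inv_of mult a b" using isg unfolding inverse_semigroup_def by blast
  then show ?thesis unfolding sinv_def by (rule theI')
qed

lemma inv1: "a \<cdot> iv a \<cdot> a = a" using inv_ex unfolding is_inv_of_def by blast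
lemma inv2: "iv a \<cdot> a \<cdot> iv a = iv a" using inv_ex unfolding is_inv_of_def by blast

lemma inv_unique: assumes "a \<cdot> b \<cdot> a = a" "b \<cdot> a \<cdot> b = b" shows "iv a = b"
proof -
  have "\<exists>!b. is_inv_of mult a b" using isg unfolding inverse_semigroup_def by blast
  moreover have "is_inv_of mult a b" using assms unfolding is_inv_of_def by blast
  ultimately show ?thesis unfolding sinv_def by (rule the1_equality)
qed

lemma iv_iv: "iv (iv a) = a"
  by (rule inv_unique) (use inv1 inv2 in \<open>simp_all add: assoc\<close>)

lemma idem_iv: "e \<cdot> e = e \<Longrightarrow> iv e = e"
  by (rule inv_unique) simp_all

lemma idem_prod: assumes "e \<cdot> e = e" "f \<cdot> f = f" shows "(e \<cdot> f) \<cdot> (e \<cdot> f) = e \<cdot> f"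
proof -
  define x where "x = iv (e \<cdot> f)"
  have x1: "(e \<cdot> f) \<cdot> x \<cdot> (e \<cdot> f) = e \<cdot> f" and x2: "x \<cdot> (e \<cdot> f) \<cdot> x = x"
    unfolding x_def using inv1 inv2 by auto
  have "iv (e \<cdot> f) = f \<cdot> x \<cdot> e"
  proof (rule inv_unique)
    have "(e \<cdot> f) \<cdot> (f \<cdot> x \<cdot> e) \<cdot> (e \<cdot> f) = e \<cdot> (f \<cdot> f) \<cdot> x \<cdot> (e \<cdot> e) \<cdot> f"
      by (simp add: assoc)
    also have "\<dots> = e \<cdot> f" using assms x1 by (simp add: assoc)
    finally show "(e \<cdot> f) \<cdot> (f \<cdot> x \<cdot> e) \<cdot> (e \<cdot> f) = e \<cdot> f" .
    have "(f \<cdot> x \<cdot> e) \<cdot> (e \<cdot> f) \<cdot> (f \<cdot> x \<cdot> e) = f \<cdot> (x \<cdot> (e \<cdot> e) \<cdot> (f \<cdot> f) \<cdot> x) \<cdot> e"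
      by (simp add: assoc)
    also have "\<dots> = f \<cdot> x \<cdot> e" using assms x2 by (simp add: assoc)
    finally show "(f \<cdot> x \<cdot> e) \<cdot> (e \<cdot> f) \<cdot> (f \<cdot> x \<cdot> e) = f \<cdot> x \<cdot> e" .
  qed
  hence xe: "x = f \<cdot> x \<cdot> e" unfolding x_def .
  have "x \<cdot> x = f \<cdot> (x \<cdot> (e \<cdot> f) \<cdot> x) \<cdot> e"
    by (subst (1) xe, subst (2) xe) (simp add: assoc)
  also have "\<dots> = x" using x2 xe by simp
  finally have "x \<cdot> x = x" .
  hence "iv x = x" by (rule idem_iv)
  hence "e \<cdot> f = x" using iv_iv x_def by metis
  thus ?thesis using \<open>x \<cdot> x = x\<close> by simp
qed

lemma idem_comm: assumes "e \<cdot> e = e" "f \<cdot> f = f" shows "e \<cdot> f = f \<cdot> e"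
proof -
  have ef: "(e \<cdot> f) \<cdot> (e \<cdot> f) = e \<cdot> f" and fe: "(f \<cdot> e) \<cdot> (f \<cdot> e) = f \<cdot> e"
    using idem_prod assms by auto
  have "iv (e \<cdot> f) = f \<cdot> e"
  proof (rule inv_unique)
    have "(e \<cdot> f) \<cdot> (f \<cdot> e) \<cdot> (e \<cdot> f) = (e \<cdot> f) \<cdot> (e \<cdot> f)"
      using assms by (simp add: assoc) (metis assoc)
    thus "(e \<cdot> f) \<cdot> (f \<cdot> e) \<cdot> (e \<cdot> f) = e \<cdot> f" using ef by simp
    have "(f \<cdot> e) \<cdot> (e \<cdot> f) \<cdot> (f \<cdot> e) = (f \<cdot> e) \<cdot> (f \<cdot> e)"
      using assms by (simp add: assoc) (metis assoc)
    thus "(f \<cdot> e) \<cdot> (e \<cdot> f) \<cdot> (f \<cdot> e) = f \<cdot> e" using fe by simp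
  qed
  moreover have "iv (e \<cdot> f) = e \<cdot> f" using ef by (rule idem_iv)
  ultimately show ?thesis by simp
qed

lemma idem_ai: "(a \<cdot> iv a) \<cdot> (a \<cdot> iv a) = a \<cdot> iv a"
  by (metis assoc inv1)

lemma idem_ia: "(iv a \<cdot> a) \<cdot> (iv a \<cdot> a) = iv a \<cdot> a"
  by (metis assoc inv1)

end

lemma hom_grp_inv:
  assumes b: "\<And>u. bij (h u)" and hm: "\<And>u v. h (m u v) = h u \<circ> h v" and i: "inverse_semigroup m"
  shows "h (sinv m u) = inv (h u)"
proof -
  interpret isg m by (rule isg.intro) (rule i)
  have "h u = h u \<circ> h (iv u) \<circ> h u" using hm inv1[of u] by metis
  hence "\<And>x. h u (h (iv u) (h u x)) = h u x" by (metis comp_apply)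
  hence c: "\<And>x. h (iv u) (h u x) = x" using b[of u] by (meson bij_def injD)
  show ?thesis
  proof
    fix y
    obtain x where "y = h u x" using b[of u] by (metis bij_def surj_def)
    thus "h (iv u) y = inv (h u) y" using c b[of u] by (simp add: bij_def inv_f_f)
  qed
qed

lemma hom_grp_idem:
  assumes b: "\<And>u. bij (h u)" and hm: "\<And>u v. h (m u v) = h u \<circ> h v" and f: "m f f = f"
  shows "h f = id"
proof
  fix x
  have "h f (h f x) = h f x" using hm[of f f] f by (metis comp_apply)
  thus "h f x = id x" using b[of f] by (simp add: bij_def inj_eq)
qed



locale mps =
  fixes addS multS :: "'a \<Rightarrow> 'a \<Rightarrow> 'a" and addT multT :: "'b \<Rightarrow> 'b \<Rightarrow> 'b"
    and \<alpha> :: "'b \<Rightarrow> 'a \<Rightarrow> 'a" and \<beta> :: "'a \<Rightarrow> 'b \<Rightarrow> 'b"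
  assumes mps: "matched_product_system addS multS addT multT \<alpha> \<beta>"
begin

lemma bS: "left_inverse_semi_brace addS multS" and bT: "left_inverse_semi_brace addT multT"
  and hA: "hom_to_aut multT addS \<alpha>" and hB: "hom_to_aut multS addT \<beta>"
  and M1: "\<And>a b u. \<alpha> u (multS (inv (\<alpha> u) a) b) = multS a (\<alpha> (inv (\<beta> a) u) b)"
  and M2: "\<And>a u v. \<beta> a (multT (inv (\<beta> a) u) v) = multT u (\<beta> (inv (\<alpha> u) a) v)"
  and M3: "\<And>a u. \<alpha> u (multS (inv (\<alpha> u) a) a) = a \<Longrightarrow> \<beta> a (multT (inv (\<beta> a) u) u) = u
        \<Longrightarrow> \<alpha> u a = a \<and> \<beta> a u = u"
  using mps unfolding matched_product_system_def by blast+

lemma isgS: "inverse_semigroup multS" using bS unfolding left_inverse_semi_brace_def by blast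
lemma isgT: "inverse_semigroup multT" using bT unfolding left_inverse_semi_brace_def by blast

sublocale S: isg multS by (rule isg.intro) (rule isgS)
sublocale T: isg multT by (rule isg.intro) (rule isgT)

lemma braceS: "multS a (addS b c) = addS (multS a b) (multS a (addS (sinv multS a) c))"
  using bS unfolding left_inverse_semi_brace_def by blast

lemma a_bij: "bij (\<alpha> u)" and a_add: "\<alpha> u (addS x y) = addS (\<alpha> u x) (\<alpha> u y)"
  and a_mult: "\<alpha> (multT u v) = \<alpha> u \<circ> \<alpha> v"
  using hA unfolding hom_to_aut_def is_add_aut_def by blast+
lemma b_bij: "bij (\<beta> a)" and b_add: "\<beta> a (addT x y) = addT (\<beta> a x) (\<beta> a y)"
  and b_mult: "\<beta> (multS a b) = \<beta> a \<circ> \<beta> b"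
  using hB unfolding hom_to_aut_def is_add_aut_def by blast+

lemma a_inv1[simp]: "\<alpha> u (inv (\<alpha> u) x) = x" using a_bij by (simp add: bij_def surj_f_inv_f)
lemma a_inv2[simp]: "inv (\<alpha> u) (\<alpha> u x) = x" using a_bij by (simp add: bij_def inv_f_f)
lemma b_inv1[simp]: "\<beta> a (inv (\<beta> a) x) = x" using b_bij by (simp add: bij_def surj_f_inv_f)
lemma b_inv2[simp]: "inv (\<beta> a) (\<beta> a x) = x" using b_bij by (simp add: bij_def inv_f_f)
lemma a_inj: "\<alpha> u x = \<alpha> u y \<longleftrightarrow> x = y" using a_bij by (simp add: bij_def inj_eq)
lemma b_inj: "\<beta> a x = \<beta> a y \<longleftrightarrow> x = y" using b_bij by (simp add: bij_def inj_eq)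

lemma a_sinv: "\<alpha> (sinv multT u) = inv (\<alpha> u)"
  by (rule hom_grp_inv[OF a_bij a_mult isgT])
lemma b_sinv: "\<beta> (sinv multS a) = inv (\<beta> a)"
  by (rule hom_grp_inv[OF b_bij b_mult isgS])
lemma a_idem: "multT f f = f \<Longrightarrow> \<alpha> f = id"
  by (rule hom_grp_idem[OF a_bij a_mult])
lemma b_idem: "multS e e = e \<Longrightarrow> \<beta> e = id"
  by (rule hom_grp_idem[OF b_bij b_mult])
lemma a_invinv[simp]: "inv (inv (\<alpha> u)) = \<alpha> u"
  by (metis a_sinv T.iv_iv)
lemma b_invinv[simp]: "inv (inv (\<beta> a)) = \<beta> a"
  by (metis b_sinv S.iv_iv)
lemma ai_add: "inv (\<alpha> u) (addS x y) = addS (inv (\<alpha> u) x) (inv (\<alpha> u) y)"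
  by (metis a_sinv a_add)
lemma b_mult_inv: "inv (\<beta> (multS a b)) = inv (\<beta> b) \<circ> inv (\<beta> a)"
  by (simp add: b_mult o_inv_distrib b_bij)
lemma b_mult_inv_app: "inv (\<beta> (multS a b)) x = inv (\<beta> b) (inv (\<beta> a) x)"
  by (simp add: b_mult_inv)

lemma M1': "\<alpha> w (multS x b) = multS (\<alpha> w x) (\<alpha> (inv (\<beta> (\<alpha> w x)) w) b)"
  using M1[of w "\<alpha> w x" b] by simp

lemma I1: "\<alpha> (inv (\<beta> a) u) (sinv multS (inv (\<alpha> u) a)) = sinv multS a"
proof -
  define ab where "ab = inv (\<alpha> u) a"
  define ub where "ub = inv (\<beta> a) u"
  define d where "d = inv (\<alpha> ub) (sinv multS a)"
  have E1: "\<And>b. \<alpha> ub (multS d b) = multS (sinv multS a) (\<alpha> u b)"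
    using M1[of ub "sinv multS a"] unfolding d_def ub_def by (simp add: b_sinv)
  have E0: "\<And>b. \<alpha> u (multS ab b) = multS a (\<alpha> ub b)"
    using M1 unfolding ab_def ub_def by simp
  have aab: "\<alpha> u ab = a" unfolding ab_def by simp
  have ad: "\<alpha> ub d = sinv multS a" unfolding d_def by simp
  have "\<alpha> u (multS (multS ab d) ab) = \<alpha> u ab"
    by (simp add: S.assoc E0 E1 aab) (metis S.assoc S.inv1)
  hence h1: "multS (multS ab d) ab = ab" by (simp add: a_inj)
  have "\<alpha> ub (multS (multS d ab) d) = \<alpha> ub d"
    by (simp add: S.assoc E0 E1 ad) (metis S.assoc S.inv2)
  hence h2: "multS (multS d ab) d = d" by (simp add: a_inj)
  have "sinv multS ab = d" by (rule S.inv_unique[OF h1 h2])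
  thus ?thesis using ad unfolding ab_def ub_def by simp
qed

lemma K3: assumes "multS e e = e" shows "multS (\<alpha> w e) (\<alpha> w e) = \<alpha> w e"
proof -
  define a where "a = \<alpha> w e"
  have ea: "inv (\<alpha> w) a = e" unfolding a_def by simp
  have "\<alpha> (inv (\<beta> a) w) e = sinv multS a"
    using I1[of a w] ea S.idem_iv[OF assms] by simp
  moreover have "\<alpha> w (multS e e) = multS a (\<alpha> (inv (\<beta> a) w) e)"
    using M1[of w a e] ea by simp
  ultimately have "a = multS a (sinv multS a)" using assms a_def by simp
  hence "multS a a = multS (multS a (sinv multS a)) a" by metis
  thus ?thesis using S.inv1 a_def by simp
qed

lemma LAMEQ: "\<alpha> w (lam addS multS b x) = lam addS multS (\<alpha> w b) (\<alpha> (inv (\<beta> (\<alpha> w b)) w) x)"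
proof -
  have "\<alpha> (inv (\<beta> (\<alpha> w b)) w) (sinv multS b) = sinv multS (\<alpha> w b)"
    using I1[of "\<alpha> w b" w] by simp
  thus ?thesis unfolding lam_def by (simp add: M1' a_add)
qed

lemma INVMUL: "multS (sinv multS (\<alpha> w p)) (\<alpha> w b) = \<alpha> (inv (\<beta> (\<alpha> w p)) w) (multS (sinv multS p) b)"
proof -
  define c where "c = \<alpha> w p"
  define w' where "w' = inv (\<beta> c) w"
  have i: "\<alpha> w' (sinv multS p) = sinv multS c"
    using I1[of c w] unfolding c_def w'_def by simp
  have "\<alpha> w' (multS (sinv multS p) b) = multS (sinv multS c) (\<alpha> (inv (\<beta> (sinv multS c)) w') b)"
    using M1'[of w' "sinv multS p" b] i by simp
  also have "inv (\<beta> (sinv multS c)) w' = w" unfolding w'_def by (simp add: b_sinv)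
  finally show ?thesis unfolding c_def w'_def by simp
qed

lemma RHOEQ: "rho addS multS (\<alpha> (inv (\<beta> (\<alpha> w b)) w) c) (\<alpha> w b)
   = \<alpha> (inv (\<beta> (\<alpha> w (lam addS multS b c))) w) (rho addS multS c b)"
proof -
  define w1 where "w1 = inv (\<beta> (\<alpha> w b)) w"
  define p where "p = addS (sinv multS b) c"
  have i: "\<alpha> w1 (sinv multS b) = sinv multS (\<alpha> w b)"
    using I1[of "\<alpha> w b" w] unfolding w1_def by simp
  have "rho addS multS (\<alpha> w1 c) (\<alpha> w b) = multS (sinv multS (\<alpha> w1 p)) (\<alpha> w1 c)"
    unfolding rho_def p_def by (simp add: a_add i)
  also have "\<dots> = \<alpha> (inv (\<beta> (\<alpha> w1 p)) w1) (rho addS multS c b)"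
    unfolding INVMUL rho_def p_def ..
  also have "inv (\<beta> (\<alpha> w1 p)) w1 = inv (\<beta> (\<alpha> w (lam addS multS b c))) w"
    unfolding lam_def M1' p_def[symmetric] w1_def[symmetric] b_mult_inv_app by simp
  finally show ?thesis unfolding w1_def .
qed

end

lemma mps_swap: "matched_product_system addS multS addT multT \<alpha> \<beta> \<Longrightarrow>
   matched_product_system addT multT addS multS \<beta> \<alpha>"
  unfolding matched_product_system_def by blast



context mps begin

definition tau :: "'a \<times> 'b \<Rightarrow> 'b" where "tau X = inv (\<beta> (fst X)) (snd X)"

abbreviation mm where "mm \<equiv> mp_mult multS multT \<alpha> \<beta>"

lemma mm_simp: "mm (a, u) (b, v) = (\<alpha> u (multS (inv (\<alpha> u) a) b), \<beta> a (multT (inv (\<beta> a) u) v))"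
  unfolding mp_mult_def by simp

lemma P0: "fst (mm X Y) = multS (fst X) (\<alpha> (tau X) (fst Y))"
  by (cases X; cases Y) (simp add: mm_simp M1 tau_def)

lemma P0': "snd (mm X Y) = \<beta> (fst X) (multT (tau X) (snd Y))"
  by (cases X; cases Y) (simp add: mm_simp tau_def)

lemma TAU: "tau (mm X Y) = multT (inv (\<beta> (\<alpha> (tau X) (fst Y))) (tau X)) (tau Y)"
proof -
  obtain a u where X: "X = (a, u)" by (cases X)
  obtain b v where Y: "Y = (b, v)" by (cases Y)
  define ub where "ub = inv (\<beta> a) u"
  define q where "q = \<alpha> ub b"
  define vb where "vb = inv (\<beta> b) v"
  have "\<beta> q (multT (inv (\<beta> q) ub) vb) = multT ub (\<beta> (inv (\<alpha> ub) q) vb)"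
    by (rule M2)
  also have "\<dots> = multT ub v" unfolding q_def vb_def by simp
  finally have e: "inv (\<beta> q) (multT ub v) = multT (inv (\<beta> q) ub) vb"
    by (metis b_inv2)
  have "tau (mm X Y) = inv (\<beta> (multS a q)) (\<beta> a (multT ub v))"
    unfolding tau_def using P0[of X Y] P0'[of X Y] X Y by (simp add: tau_def ub_def q_def)
  also have "\<dots> = inv (\<beta> q) (multT ub v)" by (simp add: b_mult_inv_app)
  finally show ?thesis using e X Y by (simp add: tau_def ub_def q_def vb_def)
qed

lemma aTAU: "\<alpha> (tau (mm X Y)) = \<alpha> (inv (\<beta> (\<alpha> (tau X) (fst Y))) (tau X)) \<circ> \<alpha> (tau Y)"
  by (simp add: TAU a_mult)

lemma assoc_fst: "fst (mm (mm X Y) Z) = fst (mm X (mm Y Z))"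
proof -
  have "fst (mm (mm X Y) Z) = multS (multS (fst X) (\<alpha> (tau X) (fst Y)))
      (\<alpha> (inv (\<beta> (\<alpha> (tau X) (fst Y))) (tau X)) (\<alpha> (tau Y) (fst Z)))"
    by (simp add: P0 aTAU)
  also have "\<dots> = fst (mm X (mm Y Z))"
    by (simp add: P0 M1' S.assoc)
  finally show ?thesis .
qed

end



locale mpsb = mps
begin

sublocale B: mps addT multT addS multS \<beta> \<alpha>
  by (rule mps.intro, rule mps_swap, rule mps)

definition sig :: "'a \<times> 'b \<Rightarrow> 'a" where "sig X = inv (\<alpha> (snd X)) (fst X)"

lemma Btau: "B.tau (prod.swap X) = sig X" unfolding B.tau_def sig_def by simp

lemma swap_mm: "mp_mult multT multS \<beta> \<alpha> (prod.swap X) (prod.swap Y) = prod.swap (mm X Y)"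
  by (cases X; cases Y) (simp add: mp_mult_def)

lemma swap_ma: "mp_add addT addS (prod.swap X) (prod.swap Y) = prod.swap (mp_add addS addT X Y)"
  by (cases X; cases Y) (simp add: mp_add_def)

lemma P0s: "snd (mm X Y) = multT (snd X) (\<beta> (sig X) (snd Y))"
  using B.P0[of "prod.swap X" "prod.swap Y"] by (simp add: swap_mm Btau)

lemma SIG: "sig (mm X Y) = multS (inv (\<alpha> (\<beta> (sig X) (snd Y))) (sig X)) (sig Y)"
  using B.TAU[of "prod.swap X" "prod.swap Y"] by (simp add: swap_mm Btau)

lemma mm_assoc: "mm (mm X Y) Z = mm X (mm Y Z)"
proof -
  have "snd (mm (mm X Y) Z) = snd (mm X (mm Y Z))"
    using B.assoc_fst[of "prod.swap X" "prod.swap Y" "prod.swap Z"] by (simp add: swap_mm)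
  thus ?thesis using assoc_fst by (simp add: prod_eq_iff)
qed

lemma mm_idem_pair: assumes "multS e e = e" "multT f f = f"
  shows "mm (e, f) Y = (multS e (fst Y), multT f (snd Y))"
  using assms by (cases Y) (simp add: mm_simp a_idem b_idem)

lemma mm_idem: assumes "mm E E = E" shows "multS (fst E) (fst E) = fst E" "multT (snd E) (snd E) = snd E"
proof -
  obtain e f where E: "E = (e, f)" by (cases E)
  have "\<alpha> f (multS (inv (\<alpha> f) e) e) = e" "\<beta> e (multT (inv (\<beta> e) f) f) = f"
    using assms E by (simp_all add: mm_simp)
  hence fx: "\<alpha> f e = e" "\<beta> e f = f" using M3 by blast+
  hence "inv (\<alpha> f) e = e" "inv (\<beta> e) f = f" by (metis a_inv2, metis b_inv2)
  hence "\<alpha> f (multS e e) = e" "\<beta> e (multT f f) = f"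
    using assms E by (simp_all add: mm_simp)
  hence "multS e e = inv (\<alpha> f) e" "multT f f = inv (\<beta> e) f" by (metis a_inv2, metis b_inv2)
  thus "multS (fst E) (fst E) = fst E" "multT (snd E) (snd E) = snd E"
    using \<open>inv (\<alpha> f) e = e\<close> \<open>inv (\<beta> e) f = f\<close> E by simp_all
qed

lemma idem_comm: assumes "mm E E = E" "mm F F = F" shows "mm E F = mm F E"
proof -
  obtain e f where E: "E = (e, f)" by (cases E)
  obtain e' f' where F: "F = (e', f')" by (cases F)
  have i: "multS e e = e" "multT f f = f" "multS e' e' = e'" "multT f' f' = f'"
    using mm_idem[OF assms(1)] mm_idem[OF assms(2)] E F by auto
  show ?thesis using mm_idem_pair i E F S.idem_comm T.idem_comm by simp
qed

definition Y0 where "Y0 X = (sinv multS (sig X), sinv multT (tau X))"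

lemma tau_Y0: "tau (Y0 X) = sinv multT (snd X)"
  using B.I1[of "snd X" "fst X"] unfolding Y0_def tau_def sig_def by (simp add: b_sinv)

lemma sig_Y0: "sig (Y0 X) = sinv multS (fst X)"
  using I1[of "fst X" "snd X"] unfolding Y0_def tau_def sig_def by (simp add: a_sinv)

lemma Y0X: "mm (Y0 X) X = (multS (sinv multS (sig X)) (sig X), multT (sinv multT (tau X)) (tau X))"
  by (simp add: prod_eq_iff P0 P0s tau_Y0 sig_Y0 a_sinv b_sinv) (simp add: Y0_def sig_def tau_def)

lemma XY0X: "mm X (mm (Y0 X) X) = X"
proof -
  obtain a u where X: "X = (a, u)" by (cases X)
  show ?thesis unfolding Y0X using X
    by (simp add: mm_simp sig_def tau_def S.assoc[symmetric] S.inv1 T.assoc[symmetric] T.inv1)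
qed

lemma Y0XY0: "mm (mm (Y0 X) X) (Y0 X) = Y0 X"
  unfolding Y0X
  by (subst mm_idem_pair) (simp_all add: S.idem_ia T.idem_ia Y0_def S.inv2 T.inv2)

lemma inv_mm: "sinv mm X = Y0 X"
proof -
  have uniq: "Y = Y0 X" if h1: "mm (mm X Y) X = X" and h2: "mm (mm Y X) Y = Y" for Y
  proof -
    let ?Z = "Y0 X"
    have z1: "mm (mm X ?Z) X = X" and z2: "mm (mm ?Z X) ?Z = ?Z"
      using XY0X Y0XY0 by (simp_all add: mm_assoc)
    have idm: "mm (mm A B) (mm A B) = mm A B" if "mm (mm A B) A = A" for A B
      using that by (metis mm_assoc)
    have iXY: "mm (mm X Y) (mm X Y) = mm X Y" using idm h1 .
    have iYX: "mm (mm Y X) (mm Y X) = mm Y X" using idm h2 .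
    have iXZ: "mm (mm X ?Z) (mm X ?Z) = mm X ?Z" using idm z1 .
    have iZX: "mm (mm ?Z X) (mm ?Z X) = mm ?Z X" using idm z2 .
    have "Y = mm (mm Y X) Y" using h2 by simp
    also have "\<dots> = mm (mm Y (mm (mm X ?Z) X)) Y" using z1 by simp
    also have "\<dots> = mm (mm (mm Y X) (mm ?Z X)) Y" by (simp add: mm_assoc)
    also have "\<dots> = mm (mm (mm ?Z X) (mm Y X)) Y" using idem_comm[OF iYX iZX] by simp
    also have "\<dots> = mm ?Z (mm X Y)" using h2 by (simp add: mm_assoc)
    finally have yy: "Y = mm ?Z (mm X Y)" .
    have "?Z = mm ?Z (mm X ?Z)" using z2 by (simp add: mm_assoc)
    also have "\<dots> = mm ?Z (mm (mm (mm X Y) X) ?Z)" using h1 by simp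
    also have "\<dots> = mm ?Z (mm (mm X Y) (mm X ?Z))" by (simp add: mm_assoc)
    also have "\<dots> = mm ?Z (mm (mm X ?Z) (mm X Y))" using idem_comm[OF iXY iXZ] by simp
    also have "\<dots> = mm (mm (mm ?Z X) ?Z) (mm X Y)" by (simp add: mm_assoc)
    also have "\<dots> = mm ?Z (mm X Y)" using z2 by simp
    finally show ?thesis using yy by simp
  qed
  have "is_inv_of mm X (Y0 X)" unfolding is_inv_of_def
    using XY0X Y0XY0 by (simp add: mm_assoc)
  moreover have "\<And>Y. is_inv_of mm X Y \<Longrightarrow> Y = Y0 X" using uniq unfolding is_inv_of_def by blast
  ultimately show ?thesis unfolding sinv_def by (rule the_equality)
qed

end



context mpsb begin

abbreviation ma where "ma \<equiv> mp_add addS addT"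

lemma ma_simp: "ma (a, u) (b, v) = (addS a b, addT u v)" by (simp add: mp_add_def)

lemma lam_mm: "lam ma mm X Y = mm X (ma (Y0 X) Y)"
  unfolding lam_def inv_mm ..

lemma LAM1: "fst (lam ma mm X Y) = \<alpha> (snd X) (lam addS multS (sig X) (fst Y))"
  unfolding lam_mm by (cases X; cases Y) (simp add: Y0_def ma_simp mm_simp sig_def tau_def lam_def)

lemma LAM1': "fst (lam ma mm X Y) = lam addS multS (fst X) (\<alpha> (tau X) (fst Y))"
  unfolding LAM1 LAMEQ by (simp add: sig_def tau_def)

lemma RHO1: "fst (rho ma mm Y X) =
   inv (\<alpha> (tau (lam ma mm X Y))) (rho addS multS (\<alpha> (tau X) (fst Y)) (fst X))"
proof -
  obtain a u where X: "X = (a, u)" by (cases X)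
  define P where "P = ma (Y0 X) Y"
  define p where "p = fst P"
  define ub where "ub = tau X"
  have fr: "fst (rho ma mm Y X) = inv (\<alpha> (tau P)) (multS (sinv multS p) (fst Y))"
  proof -
    have "rho ma mm Y X = mm (Y0 P) Y" unfolding rho_def inv_mm P_def lam_def ..
    moreover have "sig (Y0 P) = sinv multS p" using sig_Y0 p_def by simp
    ultimately show ?thesis
      by (cases "Y0 P"; cases Y) (simp add: mm_simp sig_def, simp add: Y0_def a_sinv)
  qed
  have pe: "p = addS (sinv multS (sig X)) (fst Y)"
    unfolding p_def P_def by (cases Y) (simp add: Y0_def X ma_simp)
  have i: "\<alpha> ub (sinv multS (sig X)) = sinv multS a"
    using I1[of a u] X unfolding ub_def tau_def sig_def by simp
  have "rho addS multS (\<alpha> ub (fst Y)) a = multS (sinv multS (\<alpha> ub p)) (\<alpha> ub (fst Y))"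
    unfolding rho_def pe a_add i ..
  also have "\<dots> = \<alpha> (inv (\<beta> (\<alpha> ub p)) ub) (multS (sinv multS p) (fst Y))"
    by (rule INVMUL)
  finally have r: "rho addS multS (\<alpha> ub (fst Y)) a = \<alpha> (inv (\<beta> (\<alpha> ub p)) ub) (multS (sinv multS p) (fst Y))" .
  have "tau (lam ma mm X Y) = multT (inv (\<beta> (\<alpha> ub p)) ub) (tau P)"
    unfolding lam_mm P_def[symmetric] TAU ub_def p_def ..
  hence "inv (\<alpha> (tau (lam ma mm X Y))) = inv (\<alpha> (tau P)) \<circ> inv (\<alpha> (inv (\<beta> (\<alpha> ub p)) ub))"
    by (simp add: a_mult o_inv_distrib a_bij)
  thus ?thesis using fr r X ub_def by simp
qed

lemma L1gen: assumes e: "multS e e = e" and f: "multT f f = f"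
  shows "\<alpha> (tau (mm (mm X (e, f)) Y)) = \<alpha> (tau (mm X Y))"
proof -
  have "\<beta> (\<alpha> (tau X) e) = id" using K3[OF e] b_idem by blast
  hence t: "tau (mm X (e, f)) = multT (tau X) f"
    unfolding TAU by (simp add: tau_def b_idem[OF e])
  have a1: "\<alpha> (multT (tau X) f) = \<alpha> (tau X)" using a_mult a_idem[OF f] by simp
  have fe: "fst (mm X (e, f)) = fst (mm X (e, f))" ..
  define s where "s = \<alpha> (tau X) (fst Y)"
  have "\<alpha> (inv (\<beta> s) (multT (tau X) f)) = \<alpha> (inv (\<beta> s) (tau X))"
  proof -
    have "\<beta> (sinv multS s) (multT (tau X) f) =
       multT (\<beta> (sinv multS s) (tau X)) (\<beta> (inv (\<alpha> (\<beta> (sinv multS s) (tau X))) (sinv multS s)) f)"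
      by (rule B.M1')
    moreover have "\<alpha> (\<beta> (inv (\<alpha> (\<beta> (sinv multS s) (tau X))) (sinv multS s)) f) = id"
      using B.K3[OF f] a_idem by blast
    ultimately show ?thesis by (simp add: a_mult b_sinv)
  qed
  thus ?thesis unfolding aTAU t using a1 P0 s_def by (simp add: a1)
qed

lemma L1: "\<alpha> (tau (mm (lam ma mm X Y) (rho ma mm Y X))) = \<alpha> (tau (mm X Y))"
proof -
  define P where "P = ma (Y0 X) Y"
  have "mm (lam ma mm X Y) (rho ma mm Y X) = mm (mm X (mm P (Y0 P))) Y"
    unfolding lam_def rho_def inv_mm P_def[symmetric] by (simp add: mm_assoc)
  moreover have "mm (mm P (Y0 P)) (mm P (Y0 P)) = mm P (Y0 P)"
    using XY0X[of P] by (metis mm_assoc)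
  ultimately show ?thesis
    using L1gen mm_idem by (metis prod.collapse)
qed

abbreviation R where "R \<equiv> assoc_map ma mm"
abbreviation rS where "rS \<equiv> assoc_map addS multS"

definition Psi3 :: "('a \<times> 'b) \<times> ('a \<times> 'b) \<times> ('a \<times> 'b) \<Rightarrow> 'a \<times> 'a \<times> 'a" where
  "Psi3 t = (case t of (X, Y, Z) \<Rightarrow> (fst X, \<alpha> (tau X) (fst Y), \<alpha> (tau (mm X Y)) (fst Z)))"

lemma PSI12: "Psi3 (r12 R t) = r12 rS (Psi3 t)"
proof -
  obtain X Y Z where t: "t = (X, Y, Z)" by (cases t) auto
  show ?thesis unfolding t r12_def Psi3_def assoc_map_def
    by (simp add: L1 LAM1' RHO1)
qed

lemma PSI23: "Psi3 (r23 R t) = r23 rS (Psi3 t)"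
proof -
  obtain X Y Z where t: "t = (X, Y, Z)" by (cases t) auto
  define w where "w = tau X"
  define b where "b = fst Y"
  define c' where "c' = \<alpha> (tau Y) (fst Z)"
  have s2: "\<alpha> w (fst (lam ma mm Y Z)) = lam addS multS (\<alpha> w b) (\<alpha> (tau (mm X Y)) (fst Z))"
    unfolding LAM1' LAMEQ aTAU by (simp add: w_def b_def)
  have s3: "\<alpha> (tau (mm X (lam ma mm Y Z))) (fst (rho ma mm Z Y)) =
     rho addS multS (\<alpha> (tau (mm X Y)) (fst Z)) (\<alpha> w b)"
    by (simp add: RHO1 aTAU LAM1' RHOEQ w_def b_def)
  show ?thesis unfolding t r23_def Psi3_def assoc_map_def
    using s2 s3 by (simp add: w_def b_def)
qed

end



context mpsb begin

lemma braid_Psi: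
  assumes "is_solution rS"
  shows "Psi3 ((r12 R \<circ> r23 R \<circ> r12 R) t) = Psi3 ((r23 R \<circ> r12 R \<circ> r23 R) t)"
proof -
  have "Psi3 ((r12 R \<circ> r23 R \<circ> r12 R) t) = (r12 rS \<circ> r23 rS \<circ> r12 rS) (Psi3 t)"
    by (simp add: PSI12 PSI23)
  also have "\<dots> = (r23 rS \<circ> r12 rS \<circ> r23 rS) (Psi3 t)"
    using assms unfolding is_solution_def by simp
  also have "\<dots> = Psi3 ((r23 R \<circ> r12 R \<circ> r23 R) t)"
    by (simp add: PSI12 PSI23)
  finally show ?thesis .
qed

end

definition sw3 :: "('a \<times> 'b) \<times> ('a \<times> 'b) \<times> ('a \<times> 'b) \<Rightarrow> ('b \<times> 'a) \<times> ('b \<times> 'a) \<times> ('b \<times> 'a)" where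
  "sw3 t = (case t of (X, Y, Z) \<Rightarrow> (prod.swap X, prod.swap Y, prod.swap Z))"

theorem theorem28:
  fixes addS multS :: "'a \<Rightarrow> 'a \<Rightarrow> 'a" and addT multT :: "'b \<Rightarrow> 'b \<Rightarrow> 'b"
    and \<alpha> :: "'b \<Rightarrow> 'a \<Rightarrow> 'a" and \<beta> :: "'a \<Rightarrow> 'b \<Rightarrow> 'b"
  assumes "matched_product_system addS multS addT multT \<alpha> \<beta>"
    and "is_solution (assoc_map addS multS)"
    and "is_solution (assoc_map addT multT)"
  shows "is_solution (assoc_map (mp_add addS addT) (mp_mult multS multT \<alpha> \<beta>))
    \<and> (\<forall>a u b v.
        let abar = inv (\<alpha> u) a; ubar = inv (\<beta> a) u;
            A = \<alpha> u (lam addS multS abar b); U = \<beta> a (lam addT multT ubar v);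
            Abar = inv (\<alpha> U) A; Ubar = inv (\<beta> A) U
        in assoc_map (mp_add addS addT) (mp_mult multS multT \<alpha> \<beta>) ((a, u), (b, v)) =
           ((A, U),
            (inv (\<alpha> Ubar) (rho addS multS (\<alpha> ubar b) a),
             inv (\<beta> Abar) (rho addT multT (\<beta> abar v) u))))"
proof -
  interpret I: mpsb addS multS addT multT \<alpha> \<beta>
    by (simp add: mpsb_def mps_def assms(1))
  interpret J: mpsb addT multT addS multS \<beta> \<alpha>
    by (simp add: mpsb_def mps_def mps_swap[OF assms(1)])
  have Jtau: "I.B.tau (prod.swap X) = I.sig X" for X
    unfolding I.B.tau_def I.sig_def by simp
  have Jsig: "J.sig (prod.swap X) = I.tau X" for X
    unfolding J.sig_def I.tau_def by simp
  have sinvJ: "sinv I.B.mm (prod.swap X) = prod.swap (sinv I.mm X)" for X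
    by (simp add: I.inv_mm J.inv_mm I.Y0_def J.Y0_def Jtau Jsig)
  have lamJ: "lam J.ma I.B.mm (prod.swap X) (prod.swap Y) = prod.swap (lam I.ma I.mm X Y)" for X Y
    unfolding lam_def sinvJ I.swap_ma I.swap_mm ..
  have rhoJ: "rho J.ma I.B.mm (prod.swap Y) (prod.swap X) = prod.swap (rho I.ma I.mm Y X)" for X Y
    unfolding rho_def sinvJ I.swap_ma I.swap_mm ..
  have RJ: "J.R (prod.swap X, prod.swap Y) = (prod.swap (fst (I.R (X, Y))), prod.swap (snd (I.R (X, Y))))" for X Y
    unfolding assoc_map_def by (simp add: lamJ rhoJ)
  have r12J: "r12 J.R (sw3 t) = sw3 (r12 I.R t)" for t
  proof -
    obtain X Y Z where t: "t = (X, Y, Z)" using prod_cases3 by blast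
    show ?thesis unfolding t by (simp add: sw3_def r12_def RJ split: prod.split)
  qed
  have r23J: "r23 J.R (sw3 t) = sw3 (r23 I.R t)" for t
  proof -
    obtain X Y Z where t: "t = (X, Y, Z)" using prod_cases3 by blast
    show ?thesis unfolding t by (simp add: sw3_def r23_def RJ split: prod.split)
  qed
  have JPsi: "J.Psi3 (sw3 (X, Y, Z)) = (snd X, \<beta> (I.sig X) (snd Y), \<beta> (I.sig (I.mm X Y)) (snd Z))" for X Y Z
    by (simp add: J.Psi3_def sw3_def Jtau I.swap_mm)
  have inj: "t1 = t2" if h1: "I.Psi3 t1 = I.Psi3 t2" and h2: "J.Psi3 (sw3 t1) = J.Psi3 (sw3 t2)" for t1 t2
  proof -
    obtain X Y Z where t1: "t1 = (X, Y, Z)" by (cases t1) auto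
    obtain X' Y' Z' where t2: "t2 = (X', Y', Z')" by (cases t2) auto
    have e1: "fst X = fst X'" "\<alpha> (I.tau X) (fst Y) = \<alpha> (I.tau X') (fst Y')"
      "\<alpha> (I.tau (I.mm X Y)) (fst Z) = \<alpha> (I.tau (I.mm X' Y')) (fst Z')"
      using h1 unfolding t1 t2 I.Psi3_def by simp_all
    have e2: "snd X = snd X'" "\<beta> (I.sig X) (snd Y) = \<beta> (I.sig X') (snd Y')"
      "\<beta> (I.sig (I.mm X Y)) (snd Z) = \<beta> (I.sig (I.mm X' Y')) (snd Z')"
      using h2 unfolding t1 t2 JPsi by simp_all
    have X: "X = X'" using e1(1) e2(1) by (simp add: prod_eq_iff)
    have Y: "Y = Y'" using e1(2) e2(2) X by (simp add: prod_eq_iff I.a_inj I.b_inj)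
    have Z: "Z = Z'" using e1(3) e2(3) X Y by (simp add: prod_eq_iff I.a_inj I.b_inj)
    show ?thesis using X Y Z t1 t2 by simp
  qed
  have sol: "is_solution I.R"
    unfolding is_solution_def
  proof
    fix t
    have a: "I.Psi3 ((r12 I.R \<circ> r23 I.R \<circ> r12 I.R) t) = I.Psi3 ((r23 I.R \<circ> r12 I.R \<circ> r23 I.R) t)"
      by (rule I.braid_Psi[OF assms(2)])
    have "J.Psi3 (sw3 ((r12 I.R \<circ> r23 I.R \<circ> r12 I.R) t)) = J.Psi3 ((r12 J.R \<circ> r23 J.R \<circ> r12 J.R) (sw3 t))"
      by (simp add: r12J r23J)
    also have "\<dots> = J.Psi3 ((r23 J.R \<circ> r12 J.R \<circ> r23 J.R) (sw3 t))"
      by (rule J.braid_Psi[OF assms(3)])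
    also have "\<dots> = J.Psi3 (sw3 ((r23 I.R \<circ> r12 I.R \<circ> r23 I.R) t))"
      by (simp add: r12J r23J)
    finally show "(r12 I.R \<circ> r23 I.R \<circ> r12 I.R) t = (r23 I.R \<circ> r12 I.R \<circ> r23 I.R) t"
      using inj a by blast
  qed
  have form: "assoc_map (mp_add addS addT) (mp_mult multS multT \<alpha> \<beta>) ((a, u), (b, v)) =
           ((\<alpha> u (lam addS multS (inv (\<alpha> u) a) b), \<beta> a (lam addT multT (inv (\<beta> a) u) v)),
            (inv (\<alpha> (inv (\<beta> (\<alpha> u (lam addS multS (inv (\<alpha> u) a) b))) (\<beta> a (lam addT multT (inv (\<beta> a) u) v))))
                (rho addS multS (\<alpha> (inv (\<beta> a) u) b) a),
             inv (\<beta> (inv (\<alpha> (\<beta> a (lam addT multT (inv (\<beta> a) u) v))) (\<alpha> u (lam addS multS (inv (\<alpha> u) a) b))))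
                (rho addT multT (\<beta> (inv (\<alpha> u) a) v) u)))" for a u b v
  proof -
    let ?X = "(a, u)" and ?Y = "(b, v)"
    let ?L = "lam I.ma I.mm ?X ?Y"
    have f1: "fst ?L = \<alpha> u (lam addS multS (inv (\<alpha> u) a) b)"
      by (simp add: I.LAM1 I.sig_def)
    have f2: "snd ?L = \<beta> a (lam addT multT (inv (\<beta> a) u) v)"
      using J.LAM1[of "prod.swap ?X" "prod.swap ?Y"] lamJ[of ?X ?Y] by (simp add: J.sig_def)
    have f3: "fst (rho I.ma I.mm ?Y ?X) = inv (\<alpha> (inv (\<beta> (fst ?L)) (snd ?L))) (rho addS multS (\<alpha> (inv (\<beta> a) u) b) a)"
      by (simp add: I.RHO1 I.tau_def)
    have f4: "snd (rho I.ma I.mm ?Y ?X) = inv (\<beta> (inv (\<alpha> (snd ?L)) (fst ?L))) (rho addT multT (\<beta> (inv (\<alpha> u) a) v) u)"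
      using J.RHO1[of "prod.swap ?Y" "prod.swap ?X"] lamJ[of ?X ?Y] rhoJ[of ?Y ?X] by (simp add: I.B.tau_def)
    show ?thesis unfolding assoc_map_def using f1 f2 f3 f4 by (simp add: prod_eq_iff)
  qed
  show ?thesis using sol form by (simp add: Let_def)
qed

end
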